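(* Let $n\ge1$ and let $\alpha_1,\ldots,\alpha_n,\beta_1,\beta_2,\gamma_1,\ldots,\gamma_n$ be complex parameters such that none of $\gamma_1,\ldots,\gamma_n,\beta_1+\beta_2$ is a non-positive integer. Then for $(s_1,s_2)$ with $|s_1|<1$, $|s_2|<1$ and $|s_1|+|1-s_1/s_2|<1$, \[ F_2^{(n)}\left[\begin{array}{c}\alpha_1,\ldots,\alpha_n,\beta_2,\beta_1+\beta_2\\\gamma_1,\ldots,\gamma_n,\beta_1+\beta_2\end{array};s_1,1-\frac{s_1}{s_2}\right]=s_1^{-\beta_2}s_2^{\beta_2}\,F_{n+1,2}\left[\begin{array}{c}\alpha_1,\ldots,\alpha_n,\beta_1,\beta_2\\\gamma_1,\ldots,\gamma_n\end{array};s_1,s_2\right], \] where $s_1^{-\beta_2}s_2^{\beta_2}$ means $(s_1/s_2)^{-\beta_2}$ taken with the principal branch (note $|1-s_1/s_2|<1$).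
   Context: $(x)_i=\Gamma(x+i)/\Gamma(x)$ is the Pochhammer symbol. For parameters $b_1,\ldots,b_n,b',a,c_1,\ldots,c_n,c'$, \[ F_2^{(n)}\left[\begin{array}{c}b_1,\ldots,b_n,b',a\\c_1,\ldots,c_n,c'\end{array};x,y\right]=\sum_{i,j=0}^\infty\frac{(b_1)_i\cdots(b_n)_i(b')_j(a)_{i+j}}{(c_1)_i\cdots(c_n)_i(c')_j(1)_i(1)_j}x^iy^j, \] convergent for $|x|+|y|<1$. For parameters $\alpha_1,\ldots,\alpha_n,\beta_1,\beta_2,\gamma_1,\ldots,\gamma_n$, \[ F_{n+1,2}\left[\begin{array}{c}\alpha_1,\ldots,\alpha_n,\beta_1,\beta_2\\\gamma_1,\ldots,\gamma_n\end{array};s_1,s_2\right]=\sum_{i,j=0}^\infty\frac{(\alpha_1)_{i+j}\cdots(\alpha_n)_{i+j}(\beta_1)_i(\beta_2)_j}{(\gamma_1)_{i+j}\cdots(\gamma_n)_{i+j}(1)_i(1)_j}s_1^is_2^j, \] convergent for $|s_1|<1$, $|s_2|<1$. *)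

theory Defs
  imports "HOL-Analysis.Analysis"
begin

text \<open>Parameter families b_1..b_n are given as functions nat => complex; only the
values at indices k < n matter. Double series are unordered (absolutely convergent)
sums over nat x nat.\<close>

definition F2n :: "nat \<Rightarrow> (nat \<Rightarrow> complex) \<Rightarrow> complex \<Rightarrow> complex \<Rightarrow>
    (nat \<Rightarrow> complex) \<Rightarrow> complex \<Rightarrow> complex \<Rightarrow> complex \<Rightarrow> complex" where
  "F2n n b b' a c c' x y =
     (\<Sum>\<^sub>\<infinity>(i,j)\<in>UNIV.
        ((\<Prod>k<n. pochhammer (b k) i) * pochhammer b' j * pochhammer a (i + j)) /
        ((\<Prod>k<n. pochhammer (c k) i) * pochhammer c' j * pochhammer 1 i * pochhammer 1 j)
        * x ^ i * y ^ j)"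

definition Fn12 :: "nat \<Rightarrow> (nat \<Rightarrow> complex) \<Rightarrow> complex \<Rightarrow> complex \<Rightarrow>
    (nat \<Rightarrow> complex) \<Rightarrow> complex \<Rightarrow> complex \<Rightarrow> complex" where
  "Fn12 n \<alpha> \<beta>1 \<beta>2 \<gamma> s1 s2 =
     (\<Sum>\<^sub>\<infinity>(i,j)\<in>UNIV.
        ((\<Prod>k<n. pochhammer (\<alpha> k) (i + j)) * pochhammer \<beta>1 i * pochhammer \<beta>2 j) /
        ((\<Prod>k<n. pochhammer (\<gamma> k) (i + j)) * pochhammer 1 i * pochhammer 1 j)
        * s1 ^ i * s2 ^ j)"

end

theory Submission
  imports Defs
begin

lemma geom2_summable:
  fixes r :: real assumes "0 \<le> r" "r < 1"
  shows "(\<lambda>(i::nat,j::nat). r^i * r^j) summable_on UNIV"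
proof -
  have g: "((\<lambda>j::nat. r^j) has_sum (1/(1-r))) UNIV"
    using assms by (intro sums_nonneg_imp_has_sum) (auto intro: geometric_sums)
  have "(\<lambda>(i,j). r^i * r^j) summable_on Sigma (UNIV::nat set) (\<lambda>_. UNIV::nat set)"
  proof (rule summable_on_SigmaI[where g="\<lambda>i. r^i * (1/(1-r))"])
    show "((\<lambda>y. case (x, y) of (i, j) \<Rightarrow> r ^ i * r ^ j) has_sum r ^ x * (1 / (1 - r))) UNIV" for x
      using has_sum_cmult_right[OF g, of "r^x"] by simp
    have "summable (\<lambda>i::nat. r^i * (1/(1-r)))"
      using assms by (intro summable_mult2) (simp add: summable_geometric)
    then show "(\<lambda>i::nat. r^i * (1/(1-r))) summable_on UNIV"
      using assms by (subst summable_on_UNIV_nonneg_real_iff) auto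
  qed (use assms in auto)
  then show ?thesis by simp
qed

lemma poch_ratio_bound:
  fixes a c :: complex and q :: real
  assumes c: "c \<notin> \<int>\<^sub>\<le>\<^sub>0" and q: "q > 1"
  shows "\<exists>C. \<forall>N. norm (pochhammer a N / pochhammer c N) \<le> C * q^N"
proof -
  define f where "f N = pochhammer a N / pochhammer c N" for N
  obtain N0 :: nat where N0: "real N0 > (norm a + q * norm c) / (q - 1)"
    using reals_Archimedean2 by blast
  have cN: "c + of_nat N \<noteq> 0" for N
  proof
    assume "c + of_nat N = 0"
    then have "c = - of_nat N" by (simp add: eq_neg_iff_add_eq_0)
    then show False using c by auto
  qed
  have pc: "pochhammer c N \<noteq> 0" for N
    using cN by (auto simp: pochhammer_eq_0_iff eq_neg_iff_add_eq_0)
  define C where "C = (\<Sum>N\<le>N0. norm (f N) / q^N)"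
  have small: "norm (f N) \<le> C * q^N" if "N \<le> N0" for N
  proof -
    have "norm (f N) / q^N \<le> C"
      unfolding C_def using that q by (intro member_le_sum) auto
    then show ?thesis using q by (simp add: field_simps)
  qed
  have ratio: "norm ((a + of_nat N) / (c + of_nat N)) \<le> q" if "N \<ge> N0" for N
  proof -
    have "real N \<ge> real N0" using that by simp
    have h0: "real N0 * (q - 1) > norm a + q * norm c"
      using N0 q by (simp add: pos_divide_less_eq)
    have "real N * (q - 1) \<ge> real N0 * (q - 1)"
      using \<open>real N \<ge> real N0\<close> q by (intro mult_right_mono) auto
    with h0 have h: "real N * (q - 1) > norm a + q * norm c" by linarith
    have "norm (a + of_nat N) \<le> norm a + real N"
      using norm_triangle_ineq[of a "of_nat N"] by simp
    moreover have "norm (c + of_nat N) \<ge> real N - norm c"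
      using norm_triangle_ineq2[of "of_nat N" "-c"] by (simp add: add.commute)
    ultimately have "norm (a + of_nat N) \<le> q * norm (c + of_nat N)"
    proof -
      have "q * (real N - norm c) \<le> q * norm (c + of_nat N)"
        using \<open>norm (c + of_nat N) \<ge> real N - norm c\<close> q by (intro mult_left_mono) auto
      moreover have "norm a + real N \<le> q * (real N - norm c)"
        using h by (simp add: algebra_simps)
      ultimately show ?thesis using \<open>norm (a + of_nat N) \<le> norm a + real N\<close> by linarith
    qed
    then show ?thesis using cN[of N]
      by (simp add: norm_divide divide_le_eq mult.commute)
  qed
  have big: "norm (f N) \<le> C * q^N" if "N \<ge> N0" for N
    using that
  proof (induction N rule: dec_induct)
    case base then show ?case by (rule small) simp
  next
    case (step m)
    have "f (Suc m) = f m * ((a + of_nat m) / (c + of_nat m))"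
      unfolding f_def using pc[of m] cN[of m] by (simp add: pochhammer_Suc field_simps)
    then have "norm (f (Suc m)) = norm (f m) * norm ((a + of_nat m) / (c + of_nat m))"
      by (simp add: norm_mult norm_divide)
    also have "\<dots> \<le> (C * q^m) * q"
    proof -
      have "0 \<le> C * q^m" using step(3) norm_ge_zero[of "f m"] by linarith
      then show ?thesis using step ratio[of m] by (intro mult_mono) auto
    qed
    finally show ?case by (simp add: mult_ac)
  qed
  show ?thesis unfolding f_def[symmetric]
    using small big by (metis nat_le_linear)
qed

definition subexp :: "(nat \<Rightarrow> complex) \<Rightarrow> bool" where
  "subexp F \<longleftrightarrow> (\<forall>q>1. \<exists>C. \<forall>N. norm (F N) \<le> C * q^N)"

lemma subexp_poch: "c \<notin> \<int>\<^sub>\<le>\<^sub>0 \<Longrightarrow> subexp (\<lambda>N. pochhammer a N / pochhammer c N)"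
  unfolding subexp_def using poch_ratio_bound by blast

lemma subexp_boundD:
  assumes "subexp F" "q > 1"
  shows "\<exists>C\<ge>0. \<forall>N. norm (F N) \<le> C * q^N"
proof -
  obtain C where C: "\<forall>N. norm (F N) \<le> C * q^N" using assms unfolding subexp_def by blast
  have "norm (F 0) \<le> C" using C[rule_format, of 0] by simp
  then have "0 \<le> C" using norm_ge_zero[of "F 0"] by linarith
  with C show ?thesis by blast
qed

lemma subexp_mult:
  assumes "subexp F" "subexp G"
  shows "subexp (\<lambda>N. F N * G N)"
  unfolding subexp_def
proof (intro allI impI)
  fix q :: real assume q: "q > 1"
  have sq: "sqrt q > 1" using q by simp
  obtain C1 where C1: "C1 \<ge> 0" "\<forall>N. norm (F N) \<le> C1 * sqrt q^N"
    using subexp_boundD[OF assms(1) sq] by blast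
  obtain C2 where C2: "C2 \<ge> 0" "\<forall>N. norm (G N) \<le> C2 * sqrt q^N"
    using subexp_boundD[OF assms(2) sq] by blast
  have "norm (F N * G N) \<le> (C1 * C2) * q^N" for N
  proof -
    have "norm (F N * G N) = norm (F N) * norm (G N)" by (simp add: norm_mult)
    also have "\<dots> \<le> (C1 * sqrt q^N) * (C2 * sqrt q^N)"
      using C1 C2 sq by (intro mult_mono) auto
    also have "\<dots> = (C1 * C2) * (sqrt q * sqrt q)^N" by (simp only: power_mult_distrib mult_ac)
    also have "\<dots> = (C1 * C2) * q^N" using q by simp
    finally show ?thesis .
  qed
  then show "\<exists>C. \<forall>N. norm (F N * G N) \<le> C * q^N" by blast
qed

lemma subexp_const1: "subexp (\<lambda>N. 1)"
  unfolding subexp_def by (auto intro!: exI[of _ 1] one_le_power)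

lemma subexp_prod:
  fixes n :: nat and F :: "nat \<Rightarrow> nat \<Rightarrow> complex"
  assumes "\<And>k. k < n \<Longrightarrow> subexp (F k)"
  shows "subexp (\<lambda>N. \<Prod>k<n. F k N)"
proof -
  have "\<forall>k<n. subexp (F k)" using assms by blast
  then show ?thesis
  proof (induction n)
    case 0 then show ?case by (simp add: subexp_const1)
  next
    case (Suc n)
    have "subexp (\<lambda>N. (\<Prod>k<n. F k N) * F n N)"
      using Suc by (intro subexp_mult) auto
    then show ?case by simp
  qed
qed

lemma exists_q:
  fixes S :: real assumes "0 \<le> S" "S < 1" "m > 0"
  shows "\<exists>q>1. q^m * S < 1"
proof -
  define y where "y = 2 / (1 + S)"
  have y: "y > 1" using assms unfolding y_def by (simp add: field_simps)
  define q where "q = root m y"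
  have "q > 1" unfolding q_def using y assms by simp
  moreover have "q^m = y" unfolding q_def using y assms by (simp add: real_root_pow_pos2)
  moreover have "y * S < 1" unfolding y_def using assms by (simp add: field_simps)
  ultimately show ?thesis by auto
qed

lemma binom_series:
  fixes b z :: complex
  assumes "z \<noteq> 0" "norm (1 - z) < 1"
  shows "(\<lambda>l. pochhammer b l / fact l * (1 - z)^l) sums (z powr (-b))"
proof -
  have "(\<lambda>n. ((-b) gchoose n) * (-(1-z))^n) sums (1 + (-(1-z))) powr (-b)"
    using assms by (intro gen_binomial_complex) (simp add: norm_minus_commute)
  moreover have "((-b) gchoose n) * (-(1-z))^n = pochhammer b n / fact n * (1 - z)^n" for n
  proof -
    have g: "((-b) gchoose n) = (-1)^n * pochhammer b n / fact n" by (simp add: gbinomial_pochhammer)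
    have "((-b) gchoose n) * (-(1-z))^n = ((-1)^n * (-1)^n) * (pochhammer b n / fact n * (1 - z)^n)"
      unfolding g power_minus[of "1-z"] by (simp add: mult_ac)
    also have "(-1::complex)^n * (-1)^n = 1" by (simp flip: power_mult_distrib)
    finally show ?thesis by simp
  qed
  ultimately show ?thesis by simp
qed

lemma powr_shift:
  fixes z b :: complex and i :: nat
  assumes "z \<noteq> 0"
  shows "z powr (-(b + of_nat i)) = z powr (-b) / z^i"
proof -
  have "z powr (-(b + of_nat i)) = z powr (-b) * z powr (- of_nat i)"
    by (simp add: powr_add[symmetric])
  also have "z powr (- of_nat i) = inverse (z^i)"
    using assms by (simp add: powr_minus powr_nat')
  finally show ?thesis by (simp add: divide_inverse)
qed

lemma poch_vandermonde_fact:
  fixes a c :: complex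
  shows "(\<Sum>i\<le>N. pochhammer a (N-i) / fact (N-i) * (pochhammer c i / fact i)) = pochhammer (a + c) N / fact N"
proof -
  have "pochhammer (c + a) N = (\<Sum>k\<le>N. of_nat (N choose k) * pochhammer c k * pochhammer a (N - k))"
    by (rule pochhammer_binomial_sum)
  also have "\<dots> = (\<Sum>k\<le>N. fact N * (pochhammer a (N-k) / fact (N-k) * (pochhammer c k / fact k)))"
  proof (intro sum.cong refl)
    fix k assume "k \<in> {..N}"
    then have "of_nat (N choose k) = (fact N / (fact k * fact (N-k)) :: complex)"
      by (simp add: binomial_fact)
    then show "of_nat (N choose k) * pochhammer c k * pochhammer a (N - k) = fact N * (pochhammer a (N-k) / fact (N-k) * (pochhammer c k / fact k))"
      by (simp add: field_simps)
  qed
  also have "\<dots> = fact N * (\<Sum>i\<le>N. pochhammer a (N-i) / fact (N-i) * (pochhammer c i / fact i))"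
    by (simp add: sum_distrib_left)
  finally show ?thesis by (simp add: field_simps add.commute)
qed

lemma core:
  fixes b \<beta>1 z :: complex and N :: nat
  assumes z: "z \<noteq> 0" "norm (1 - z) < 1"
  shows "(\<lambda>l. pochhammer b l / fact l * (pochhammer (\<beta>1 + b + of_nat l) N / fact N) * (1 - z)^l) sums
     (z powr (-b) * (\<Sum>i\<le>N. pochhammer \<beta>1 (N-i) / fact (N-i) * (pochhammer b i / fact i) / z^i))"
proof -
  define c where "c i = pochhammer \<beta>1 (N-i) / fact (N-i) * (pochhammer b i / fact i)" for i
  have "(\<lambda>l. \<Sum>i\<le>N. c i * (pochhammer (b + of_nat i) l / fact l * (1 - z)^l)) sums
        (\<Sum>i\<le>N. c i * z powr (-(b + of_nat i)))"
    by (rule sums_sum, rule sums_mult, rule binom_series[OF z])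
  moreover have "(\<Sum>i\<le>N. c i * (pochhammer (b + of_nat i) l / fact l * (1 - z)^l)) =
     pochhammer b l / fact l * (pochhammer (\<beta>1 + b + of_nat l) N / fact N) * (1 - z)^l" for l
  proof -
    have "(\<Sum>i\<le>N. c i * (pochhammer (b + of_nat i) l / fact l * (1 - z)^l)) =
      (\<Sum>i\<le>N. (pochhammer b l / fact l * (1 - z)^l) * (pochhammer \<beta>1 (N-i) / fact (N-i) * (pochhammer (b + of_nat l) i / fact i)))"
    proof (intro sum.cong refl)
      fix i
      have "pochhammer b i * pochhammer (b + of_nat i) l = pochhammer b l * pochhammer (b + of_nat l) i"
        using pochhammer_product'[of b i l] pochhammer_product'[of b l i] by (simp add: add.commute)
      then show "c i * (pochhammer (b + of_nat i) l / fact l * (1 - z)^l) =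
        (pochhammer b l / fact l * (1 - z)^l) * (pochhammer \<beta>1 (N-i) / fact (N-i) * (pochhammer (b + of_nat l) i / fact i))"
        unfolding c_def by (simp add: field_simps)
    qed
    also have "\<dots> = (pochhammer b l / fact l * (1 - z)^l) * (\<Sum>i\<le>N. pochhammer \<beta>1 (N-i) / fact (N-i) * (pochhammer (b + of_nat l) i / fact i))"
      by (simp only: sum_distrib_left)
    also have "\<dots> = (pochhammer b l / fact l * (1 - z)^l) * (pochhammer (\<beta>1 + (b + of_nat l)) N / fact N)"
      by (simp only: poch_vandermonde_fact)
    finally show ?thesis by (simp add: mult_ac add.assoc)
  qed
  moreover have "(\<Sum>i\<le>N. c i * z powr (-(b + of_nat i))) =
     z powr (-b) * (\<Sum>i\<le>N. pochhammer \<beta>1 (N-i) / fact (N-i) * (pochhammer b i / fact i) / z^i)"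
    unfolding sum_distrib_left
  proof (intro sum.cong refl)
    fix i show "c i * z powr (-(b + of_nat i)) = z powr (-b) * (pochhammer \<beta>1 (N-i) / fact (N-i) * (pochhammer b i / fact i) / z^i)"
      unfolding powr_shift[OF z(1)] c_def by (simp add: field_simps)
  qed
  ultimately show ?thesis by simp
qed

lemma binom_term_le:
  fixes X W :: real assumes "0 \<le> X" "0 \<le> W"
  shows "of_nat ((i+j) choose i) * X^i * W^j \<le> (X + W)^(i+j)"
proof -
  have "(X + W)^(i+j) = (\<Sum>k\<le>i+j. of_nat ((i+j) choose k) * X^k * W^(i+j-k))"
    by (rule binomial_ring)
  moreover have "of_nat ((i+j) choose i) * X^i * W^(i+j-i) \<le> (\<Sum>k\<le>i+j. of_nat ((i+j) choose k) * X^k * W^(i+j-k))"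
    using assms by (intro member_le_sum) auto
  ultimately show ?thesis by simp
qed

lemma L_alt1:
  fixes A G :: complex and a b x w :: complex
  assumes "pochhammer a j \<noteq> 0" "G \<noteq> 0"
  shows "(A * pochhammer b j * pochhammer a (i + j)) / (G * pochhammer a j * pochhammer 1 i * pochhammer 1 j) * x ^ i * w ^ j
    = A / G * x^i * w^j * (pochhammer b j / pochhammer 1 j * (pochhammer a (i+j) / pochhammer 1 (i+j)) * (pochhammer 1 j / pochhammer a j) * of_nat ((i+j) choose i))"
proof -
  have "of_nat ((i+j) choose i) = (fact (i+j) / (fact i * fact j) :: complex)"
    by (simp add: binomial_fact)
  then show ?thesis using assms by (simp add: pochhammer_fact[symmetric] field_simps)
qed

lemma L_alt2:
  fixes A G :: complex and a b x w :: complex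
  assumes "pochhammer a j \<noteq> 0" "G \<noteq> 0"
  shows "(A * pochhammer b j * pochhammer a (i + j)) / (G * pochhammer a j * pochhammer 1 i * pochhammer 1 j) * x ^ i * w ^ j
    = A / G * x^i * (pochhammer b j / fact j * (pochhammer (a + of_nat j) i / fact i) * w^j)"
proof -
  have "pochhammer a (i + j) = pochhammer a j * pochhammer (a + of_nat j) i"
    using pochhammer_product'[of a j i] by (simp add: add.commute)
  then show ?thesis using assms by (simp add: pochhammer_fact[symmetric] field_simps)
qed

lemma R_alt:
  fixes A G :: complex and b1 b x s2 :: complex
  assumes "G \<noteq> 0"
  shows "(A * pochhammer b1 i * pochhammer b j) / (G * pochhammer 1 i * pochhammer 1 j) * x ^ i * s2 ^ j
    = A / G * (pochhammer b1 i / pochhammer 1 i) * (pochhammer b j / pochhammer 1 j) * x^i * s2^j"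
  using assms by (simp add: pochhammer_fact[symmetric] field_simps)

lemma bij_diag: "bij_betw (\<lambda>(N::nat,k::nat). (N-k, k)) (Sigma UNIV (\<lambda>N. {..N})) UNIV"
  by (rule bij_betw_byWitness[where f'="\<lambda>(i,j). (i+j, j)"]) auto

lemma poch_nz: "(c::complex) \<notin> \<int>\<^sub>\<le>\<^sub>0 \<Longrightarrow> pochhammer c N \<noteq> 0"
  by (auto simp: pochhammer_eq_0_iff)

theorem corollary6p3:
  fixes n :: nat and \<alpha> \<gamma> :: "nat \<Rightarrow> complex" and \<beta>1 \<beta>2 s1 s2 :: complex
  assumes "n \<ge> 1"
    and "\<forall>k<n. \<gamma> k \<notin> \<int>\<^sub>\<le>\<^sub>0"
    and "\<beta>1 + \<beta>2 \<notin> \<int>\<^sub>\<le>\<^sub>0"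
    and "norm s1 < 1" and "norm s2 < 1"
    and "norm s1 + norm (1 - s1 / s2) < 1"
  shows "F2n n \<alpha> \<beta>2 (\<beta>1 + \<beta>2) \<gamma> (\<beta>1 + \<beta>2) s1 (1 - s1 / s2)
         = (s1 / s2) powr (- \<beta>2) * Fn12 n \<alpha> \<beta>1 \<beta>2 \<gamma> s1 s2"
proof -
  define a where "a = \<beta>1 + \<beta>2"
  define z where "z = s1 / s2"
  define w where "w = 1 - s1 / s2"
  have s2: "s2 \<noteq> 0"
  proof
    assume "s2 = 0" then show False using assms(6) by simp
  qed
  have s1: "s1 \<noteq> 0"
  proof
    assume "s1 = 0" then show False using assms(6) by simp
  qed
  have z0: "z \<noteq> 0" using s1 s2 by (simp add: z_def)
  have wz: "w = 1 - z" by (simp add: w_def z_def)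
  have nw: "norm w < 1" using assms(6) norm_ge_zero[of s1] unfolding w_def by linarith
  have nz: "norm (1 - z) < 1" using nw wz by simp
  have a_nonpos: "a \<notin> \<int>\<^sub>\<le>\<^sub>0" using assms(3) by (simp add: a_def)
  have pa: "pochhammer a N \<noteq> 0" for N using poch_nz[OF a_nonpos] .
  have pg: "(\<Prod>k<n. pochhammer (\<gamma> k) N) \<noteq> 0" for N
    using assms(2) poch_nz by (simp add: prod_zero_iff)
  define Pn where "Pn N = (\<Prod>k<n. pochhammer (\<alpha> k) N) / (\<Prod>k<n. pochhammer (\<gamma> k) N)" for N
  have "Pn = (\<lambda>N. \<Prod>k<n. pochhammer (\<alpha> k) N / pochhammer (\<gamma> k) N)"
    by (simp add: Pn_def fun_eq_iff prod_dividef)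
  then have Pn_sub: "subexp Pn"
    using assms(2) by (simp add: subexp_prod subexp_poch)
  define B where "B j = pochhammer \<beta>2 j / pochhammer 1 j" for j
  define B1 where "B1 j = pochhammer \<beta>1 j / pochhammer 1 j" for j
  define A where "A j = pochhammer a j / pochhammer 1 j" for j
  define E where "E j = pochhammer 1 j / pochhammer a j" for j
  have B_sub: "subexp B" unfolding B_def by (rule subexp_poch) simp
  have B1_sub: "subexp B1" unfolding B1_def by (rule subexp_poch) simp
  have A_sub: "subexp A" unfolding A_def by (rule subexp_poch) simp
  have E_sub: "subexp E" unfolding E_def by (rule subexp_poch) (rule a_nonpos)

  define Lf where "Lf = (\<lambda>(i,j). ((\<Prod>k<n. pochhammer (\<alpha> k) i) * pochhammer \<beta>2 j * pochhammer a (i + j)) /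
        ((\<Prod>k<n. pochhammer (\<gamma> k) i) * pochhammer a j * pochhammer 1 i * pochhammer 1 j)
        * s1 ^ i * w ^ j)"
  define Rf where "Rf = (\<lambda>(i,j). ((\<Prod>k<n. pochhammer (\<alpha> k) (i + j)) * pochhammer \<beta>1 i * pochhammer \<beta>2 j) /
        ((\<Prod>k<n. pochhammer (\<gamma> k) (i + j)) * pochhammer 1 i * pochhammer 1 j)
        * s1 ^ i * s2 ^ j)"
  have LHS: "F2n n \<alpha> \<beta>2 (\<beta>1 + \<beta>2) \<gamma> (\<beta>1 + \<beta>2) s1 (1 - s1 / s2) = infsum Lf UNIV"
    unfolding F2n_def Lf_def a_def w_def ..
  have RHS: "Fn12 n \<alpha> \<beta>1 \<beta>2 \<gamma> s1 s2 = infsum Rf UNIV"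
    unfolding Fn12_def Rf_def ..
  have Lf1: "Lf (i,j) = Pn i * s1^i * w^j * (B j * A (i+j) * E j * of_nat ((i+j) choose i))" for i j
    unfolding Lf_def Pn_def B_def A_def E_def using L_alt1[OF pa pg] by simp
  have Lf2: "Lf (i,j) = Pn i * s1^i * (pochhammer \<beta>2 j / fact j * (pochhammer (\<beta>1 + \<beta>2 + of_nat j) i / fact i) * (1 - z)^j)" for i j
    unfolding Lf_def Pn_def using L_alt2[OF pa pg] by (simp add: a_def wz)
  have Rf1: "Rf (i,j) = Pn (i+j) * B1 i * B j * s1^i * s2^j" for i j
    unfolding Rf_def Pn_def B_def B1_def using R_alt[OF pg] by simp

  define X where "X = norm s1"
  define W where "W = norm w"
  have X0: "X \<ge> 0" and W0: "W \<ge> 0" by (simp_all add: X_def W_def)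
  have XW: "X + W < 1" using assms(6) by (simp add: X_def W_def w_def)
  obtain q where q: "q > 1" "q^3 * (X + W) < 1"
    using exists_q[of "X + W" 3] X0 W0 XW by auto
  obtain CP where CP: "CP \<ge> 0" "\<forall>N. norm (Pn N) \<le> CP * q^N" using subexp_boundD[OF Pn_sub q(1)] by blast
  obtain CB where CB: "CB \<ge> 0" "\<forall>N. norm (B N) \<le> CB * q^N" using subexp_boundD[OF B_sub q(1)] by blast
  obtain CA where CA: "CA \<ge> 0" "\<forall>N. norm (A N) \<le> CA * q^N" using subexp_boundD[OF A_sub q(1)] by blast
  obtain CE where CE: "CE \<ge> 0" "\<forall>N. norm (E N) \<le> CE * q^N" using subexp_boundD[OF E_sub q(1)] by blast
  define K where "K = CP * CB * CA * CE"
  define r where "r = q^3 * (X + W)"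
  have K0: "K \<ge> 0" using CP CB CA CE by (simp add: K_def)
  have r0: "r \<ge> 0" "r < 1" using q X0 W0 by (simp_all add: r_def)
  have Lbound: "norm (Lf (i,j)) \<le> K * (r^i * r^j)" for i j
  proof -
    define T where "T = of_nat ((i+j) choose i) * X^i * W^j"
    have T0: "T \<ge> 0" using X0 W0 by (simp add: T_def)
    have "norm (Lf (i,j)) = norm (Pn i) * norm (B j) * norm (A (i+j)) * norm (E j) * T"
      unfolding Lf1 T_def X_def W_def by (simp add: norm_mult norm_power mult_ac)
    also have "\<dots> \<le> (CP*q^i) * (CB*q^j) * (CA*q^(i+j)) * (CE*q^j) * T"
    proof (rule mult_right_mono[OF _ T0])
      show "norm (Pn i) * norm (B j) * norm (A (i+j)) * norm (E j) \<le> (CP*q^i) * (CB*q^j) * (CA*q^(i+j)) * (CE*q^j)"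
        using CP CB CA CE q by (intro mult_mono) auto
    qed
    also have "\<dots> = K * (of_nat ((i+j) choose i) * (q*q*X)^i * (q*q*q*W)^j)"
      by (simp add: K_def T_def power_mult_distrib power_add mult_ac)
    also have "\<dots> \<le> K * (of_nat ((i+j) choose i) * (q*q*q*X)^i * (q*q*q*W)^j)"
    proof -
      have "q*q*X \<le> q*q*q*X" using q X0 by (simp add: mult_right_mono mult_left_mono)
      then have "(q*q*X)^i \<le> (q*q*q*X)^i" using q X0 by (intro power_mono) auto
      then show ?thesis using K0 q W0 by (intro mult_left_mono mult_right_mono) auto
    qed
    also have "\<dots> \<le> K * (q*q*q*X + q*q*q*W)^(i+j)"
      using binom_term_le[of "q*q*q*X" "q*q*q*W" i j] q X0 W0 K0 by (intro mult_left_mono) auto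
    also have "\<dots> = K * (r^i * r^j)"
      by (simp add: r_def power_add power3_eq_cube distrib_left)
    finally show ?thesis .
  qed
  have Lsum: "Lf summable_on UNIV"
  proof -
    have "(\<lambda>x. K * (case x of (i,j) \<Rightarrow> r^i * r^j)) summable_on UNIV"
      using geom2_summable[OF r0] by (rule summable_on_cmult_right)
    then have "(\<lambda>x. norm (Lf x)) summable_on UNIV"
      by (rule summable_on_comparison_test) (auto simp: Lbound split: prod.splits)
    then show ?thesis by (rule abs_summable_summable)
  qed
  define Y where "Y = norm s2"
  have Y0: "Y \<ge> 0" by (simp add: Y_def)
  have MXY: "max X Y < 1" using assms(4,5) by (simp add: X_def Y_def)
  obtain p where p: "p > 1" "p^2 * max X Y < 1"
  proof -
    have M0: "0 \<le> max X Y" using X0 by (simp add: le_max_iff_disj)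
    show ?thesis using exists_q[OF M0 MXY, of 2] that by auto
  qed
  obtain DP where DP: "DP \<ge> 0" "\<forall>N. norm (Pn N) \<le> DP * p^N" using subexp_boundD[OF Pn_sub p(1)] by blast
  obtain DB where DB: "DB \<ge> 0" "\<forall>N. norm (B N) \<le> DB * p^N" using subexp_boundD[OF B_sub p(1)] by blast
  obtain DB1 where DB1: "DB1 \<ge> 0" "\<forall>N. norm (B1 N) \<le> DB1 * p^N" using subexp_boundD[OF B1_sub p(1)] by blast
  define K' where "K' = DP * DB1 * DB"
  define r' where "r' = p^2 * max X Y"
  have K'0: "K' \<ge> 0" using DP DB DB1 by (simp add: K'_def)
  have r'0: "r' \<ge> 0" "r' < 1" using p X0 Y0 by (simp_all add: r'_def)
  have Rbound: "norm (Rf (i,j)) \<le> K' * (r'^i * r'^j)" for i j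
  proof -
    define T where "T = X^i * Y^j"
    have T0: "T \<ge> 0" using X0 Y0 by (simp add: T_def)
    have "norm (Rf (i,j)) = norm (Pn (i+j)) * norm (B1 i) * norm (B j) * T"
      unfolding Rf1 T_def X_def Y_def by (simp add: norm_mult norm_power mult_ac)
    also have "\<dots> \<le> (DP*p^(i+j)) * (DB1*p^i) * (DB*p^j) * T"
    proof (rule mult_right_mono[OF _ T0])
      show "norm (Pn (i+j)) * norm (B1 i) * norm (B j) \<le> (DP*p^(i+j)) * (DB1*p^i) * (DB*p^j)"
        using DP DB DB1 p by (intro mult_mono) auto
    qed
    also have "\<dots> = K' * ((p*p*X)^i * (p*p*Y)^j)"
      by (simp add: K'_def T_def power_mult_distrib power_add mult_ac)
    also have "\<dots> \<le> K' * (r'^i * r'^j)"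
    proof -
      have "p*p*X \<le> r'" using p X0 by (simp add: r'_def power2_eq_square mult_left_mono)
      moreover have "p*p*Y \<le> r'" using p Y0 by (simp add: r'_def power2_eq_square mult_left_mono)
      ultimately show ?thesis using K'0 p X0 Y0 r'0
        by (intro mult_left_mono mult_mono power_mono) auto
    qed
    finally show ?thesis .
  qed
  have Rsum: "Rf summable_on UNIV"
  proof -
    have "(\<lambda>x. K' * (case x of (i,j) \<Rightarrow> r'^i * r'^j)) summable_on UNIV"
      using geom2_summable[OF r'0] by (rule summable_on_cmult_right)
    then have "(\<lambda>x. norm (Rf x)) summable_on UNIV"
      by (rule summable_on_comparison_test) (auto simp: Rbound split: prod.splits)
    then show ?thesis by (rule abs_summable_summable)
  qed

  define cN where "cN N = (\<Sum>i\<le>N. pochhammer \<beta>1 (N-i) / fact (N-i) * (pochhammer \<beta>2 i / fact i) / z^i)" for N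
  have Lsig: "(\<lambda>(x,y). Lf (x,y)) summable_on Sigma UNIV (\<lambda>_. UNIV)" using Lsum by simp
  have inner: "infsum (\<lambda>j. Lf (i,j)) UNIV = z powr (-\<beta>2) * (Pn i * s1^i * cN i)" for i
  proof -
    have sm: "(\<lambda>j. Lf (i,j)) summable_on UNIV"
      using summable_on_SigmaD1[OF Lsig, of i] by simp
    have s_a: "(\<lambda>j. Lf (i,j)) sums infsum (\<lambda>j. Lf (i,j)) UNIV"
      by (rule has_sum_imp_sums[OF has_sum_infsum[OF sm]])
    have "(\<lambda>j. Pn i * s1^i * (pochhammer \<beta>2 j / fact j * (pochhammer (\<beta>1 + \<beta>2 + of_nat j) i / fact i) * (1 - z)^j))
          sums (Pn i * s1^i * (z powr (-\<beta>2) * cN i))"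
      unfolding cN_def by (rule sums_mult[OF core[OF z0 nz]])
    then have s_b: "(\<lambda>j. Lf (i,j)) sums (Pn i * s1^i * (z powr (-\<beta>2) * cN i))"
      by (simp only: Lf2)
    show ?thesis using sums_unique2[OF s_a s_b] by (simp add: mult_ac)
  qed
  have L_eval: "infsum Lf UNIV = z powr (-\<beta>2) * infsum (\<lambda>i. Pn i * s1^i * cN i) UNIV"
  proof -
    have "infsum Lf UNIV = infsum Lf (Sigma UNIV (\<lambda>_. UNIV))" by simp
    also have "\<dots> = infsum (\<lambda>i. infsum (\<lambda>j. Lf (i,j)) UNIV) UNIV"
      using Lsum by (intro infsum_Sigma_banach[symmetric]) simp
    also have "\<dots> = infsum (\<lambda>i. z powr (-\<beta>2) * (Pn i * s1^i * cN i)) UNIV"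
      by (simp only: inner)
    also have "\<dots> = z powr (-\<beta>2) * infsum (\<lambda>i. Pn i * s1^i * cN i) UNIV"
      by (rule infsum_cmult_right')
    finally show ?thesis .
  qed
  have Rdiag: "(\<Sum>k\<le>N. Rf (N-k, k)) = Pn N * s1^N * cN N" for N
    unfolding cN_def sum_distrib_left
  proof (intro sum.cong refl)
    fix k assume "k \<in> {..N}"
    then have kN: "k \<le> N" by simp
    then have e1: "N - k + k = N" by simp
    have pw: "s1^N = s1^(N-k) * s1^k" using power_add[of s1 "N-k" k] e1 by simp
    show "Rf (N-k, k) = Pn N * s1^N * (pochhammer \<beta>1 (N-k) / fact (N-k) * (pochhammer \<beta>2 k / fact k) / z^k)"
      unfolding Rf1 e1 B1_def B_def z_def pw using s1 s2
      by (simp add: pochhammer_fact[symmetric] power_divide field_simps)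
  qed
  have R_eval: "infsum Rf UNIV = infsum (\<lambda>N. Pn N * s1^N * cN N) UNIV"
  proof -
    have "infsum Rf UNIV = infsum (\<lambda>x. Rf ((\<lambda>(N,k). (N-k, k)) x)) (Sigma UNIV (\<lambda>N. {..N}))"
      by (rule infsum_reindex_bij_betw[OF bij_diag, symmetric])
    also have "\<dots> = infsum (\<lambda>N. infsum (\<lambda>k. Rf (N-k, k)) {..N}) UNIV"
    proof -
      have "(\<lambda>x. Rf ((\<lambda>(N,k). (N-k, k)) x)) summable_on (Sigma UNIV (\<lambda>N. {..N}))"
        using summable_on_reindex_bij_betw[OF bij_diag] Rsum by blast
      then show ?thesis by (subst infsum_Sigma_banach[symmetric]) auto
    qed
    also have "\<dots> = infsum (\<lambda>N. Pn N * s1^N * cN N) UNIV"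
      by (simp add: Rdiag)
    finally show ?thesis .
  qed
  show ?thesis
    unfolding LHS RHS L_eval R_eval z_def by simp
qed

end
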